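(* Let $n\ge 2$ and let $P_n(x_0)$ be a $\Pi^0_{2n-3}$-predicate on $\mathbb N_+$. Then for each $2\le i<n$ there is a $\Pi^0_{2i-3}$-predicate $P_i(x_0,x_1,y_1,x_2,y_2,\dots,x_{n-i},y_{n-i})$ on $\mathbb N_+$ such that, for every $2\le i<n$, writing $\overline x=(x_0,x_1,y_1,\dots,x_{n-i-1},y_{n-i-1})$ and letting all quantifiers range over $\mathbb N_+$: (i) $P_{i+1}(\overline x)$ is logically equivalent to $\forall x_{n-i}\,\exists y_{n-i}: P_i(\overline x,x_{n-i},y_{n-i})$; (ii) if $\forall y_{n-i}:\neg P_i(\overline x,x_{n-i},y_{n-i})$, then $\forall x'_{n-i}\ge x_{n-i}\ \forall y_{n-i}:\neg P_i(\overline x,x'_{n-i},y_{n-i})$.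
   Context: $\mathbb N_+=\{1,2,\dots\}$. $\Pi^0_m$ denotes the $m$-th universal level of the arithmetical hierarchy. *)

theory Defs
  imports Main
begin

primrec pr_rec :: "(nat list \<Rightarrow> nat) \<Rightarrow> (nat list \<Rightarrow> nat) \<Rightarrow> nat \<Rightarrow> nat list \<Rightarrow> nat" where
  "pr_rec g h 0 xs = g xs"
| "pr_rec g h (Suc k) xs = h (k # pr_rec g h k xs # xs)"

inductive primrec_fn :: "nat \<Rightarrow> (nat list \<Rightarrow> nat) \<Rightarrow> bool" where
  pr_zero: "primrec_fn n (\<lambda>_. 0)"
| pr_succ: "primrec_fn 1 (\<lambda>xs. Suc (hd xs))"
| pr_proj: "i < n \<Longrightarrow> primrec_fn n (\<lambda>xs. xs ! i)"
| pr_comp: "primrec_fn m g \<Longrightarrow> length fs = m \<Longrightarrow> (\<forall>f\<in>set fs. primrec_fn n f)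
            \<Longrightarrow> primrec_fn n (\<lambda>xs. g (map (\<lambda>f. f xs) fs))"
| pr_rec: "primrec_fn n g \<Longrightarrow> primrec_fn (Suc (Suc n)) h
            \<Longrightarrow> primrec_fn (Suc n) (\<lambda>ys. pr_rec g h (hd ys) (tl ys))"

definition primrec_pred :: "nat \<Rightarrow> (nat list \<Rightarrow> bool) \<Rightarrow> bool" where
  "primrec_pred k P \<longleftrightarrow> (\<exists>f. primrec_fn k f \<and> (\<forall>xs. length xs = k \<longrightarrow> (P xs \<longleftrightarrow> f xs \<noteq> 0)))"

text \<open>Arithmetical hierarchy (Kleene normal form): flag True = Sigma, False = Pi.
  Level 0 = (primitive) recursive relations.\<close>
fun arith :: "bool \<Rightarrow> nat \<Rightarrow> nat \<Rightarrow> (nat list \<Rightarrow> bool) \<Rightarrow> bool" where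
  "arith b 0 k P = primrec_pred k P"
| "arith True (Suc m) k P = (\<exists>Q. arith False m (Suc k) Q \<and>
      (\<forall>xs. length xs = k \<longrightarrow> (P xs \<longleftrightarrow> (\<exists>y. Q (xs @ [y])))))"
| "arith False (Suc m) k P = (\<exists>Q. arith True m (Suc k) Q \<and>
      (\<forall>xs. length xs = k \<longrightarrow> (P xs \<longleftrightarrow> (\<forall>y. Q (xs @ [y])))))"

abbreviation Pi0 :: "nat \<Rightarrow> nat \<Rightarrow> (nat list \<Rightarrow> bool) \<Rightarrow> bool" where
  "Pi0 m k P \<equiv> arith False m k P"

definition pos_list :: "nat list \<Rightarrow> bool" where
  "pos_list xs \<longleftrightarrow> (\<forall>x\<in>set xs. 0 < x)"

definition Pi0_pos :: "nat \<Rightarrow> nat \<Rightarrow> (nat list \<Rightarrow> bool) \<Rightarrow> bool" where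
  "Pi0_pos m k P \<longleftrightarrow> (\<exists>Q. Pi0 m k Q \<and> (\<forall>xs. length xs = k \<and> pos_list xs \<longrightarrow> (P xs \<longleftrightarrow> Q xs)))"

end

theory Submission imports Defs begin

lemma pr_perm:
  assumes "primrec_fn m g" "length is = m" "\<forall>i\<in>set is. i < n"
  shows "primrec_fn n (\<lambda>xs. g (map ((!) xs) is))"
proof -
  have "primrec_fn n (\<lambda>xs. g (map (\<lambda>f. f xs) (map (\<lambda>i xs. xs ! i) is)))"
    by (rule pr_comp[OF assms(1)]) (use assms in \<open>auto intro: pr_proj\<close>)
  then show ?thesis by (simp add: comp_def)
qed

lemma pr_const1: "primrec_fn n (\<lambda>_. Suc 0)"
proof -
  have "primrec_fn n (\<lambda>xs. (\<lambda>xs. Suc (hd xs)) (map (\<lambda>f. f xs) [\<lambda>_. 0]))"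
    by (rule pr_comp[OF pr_succ]) (auto intro: pr_zero)
  then show ?thesis by simp
qed

lemma pr_and: "\<exists>A. primrec_fn (Suc (Suc 0)) A \<and> (\<forall>u v. A [u,v] = (if u = 0 then 0 else v))"
proof -
  have "primrec_fn (Suc (Suc 0)) (\<lambda>ys. pr_rec (\<lambda>_. 0) (\<lambda>xs. xs ! 2) (hd ys) (tl ys))"
    by (rule primrec_fn.pr_rec) (auto intro: pr_zero pr_proj)
  moreover have "\<forall>u v. pr_rec (\<lambda>_. 0) (\<lambda>xs. xs ! 2) (hd [u,v]) (tl [u,v]) = (if u=0 then 0 else v)"
    by (intro allI, case_tac u) auto
  ultimately show ?thesis by blast
qed

lemma pr_or: "\<exists>A. primrec_fn (Suc (Suc 0)) A \<and> (\<forall>u v. A [u,v] = (if u = 0 then v else u))"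
proof -
  have h: "primrec_fn (Suc (Suc (Suc 0))) (\<lambda>xs. (\<lambda>xs. Suc (hd xs)) (map (\<lambda>f. f xs) [\<lambda>xs. xs ! 0]))"
    by (rule pr_comp[OF pr_succ]) (auto intro: pr_proj)
  have "primrec_fn (Suc (Suc 0)) (\<lambda>ys. pr_rec (\<lambda>xs. xs ! 0) (\<lambda>xs. Suc (xs ! 0)) (hd ys) (tl ys))"
    by (rule primrec_fn.pr_rec) (use h in \<open>auto intro: pr_proj\<close>)
  moreover have "\<forall>u v. pr_rec (\<lambda>xs. xs ! 0) (\<lambda>xs. Suc (xs ! 0)) (hd [u,v]) (tl [u,v]) = (if u=0 then v else u)"
    by (intro allI, case_tac u) auto
  ultimately show ?thesis by blast
qed

lemma map_nth_upt_take: "k \<le> length ys \<Longrightarrow> map ((!) ys) [0..<k] = take k ys"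
  by (rule nth_equalityI) auto

lemma map_nth_shift: "map ((!) (a # b # zs)) [Suc (Suc 0)..<Suc (Suc (length zs))] = zs"
  by (rule nth_equalityI) (simp_all del: upt_Suc)

lemma pr_bquant:
  assumes f: "primrec_fn (Suc k) f"
    and O: "primrec_fn (Suc (Suc 0)) A"
    and g0: "primrec_fn k g0"
  shows "\<exists>F. primrec_fn (Suc k) F \<and> (\<forall>ys. length ys = Suc k \<longrightarrow>
     F ys = pr_rec g0 (\<lambda>ws. A [ws ! 1, f (take k (drop 2 ws) @ [ws ! 0])]) (ys ! k) (take k ys))"
proof -
  define fp where "fp = (\<lambda>ws. f (map ((!) ws) ([Suc (Suc 0)..<Suc (Suc k)] @ [0])))"
  have fp: "primrec_fn (Suc (Suc k)) fp" unfolding fp_def by (rule pr_perm[OF f]) auto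
  define h where "h = (\<lambda>ws. A (map (\<lambda>g. g ws) [\<lambda>ws. ws ! 1, fp]))"
  have hp: "primrec_fn (Suc (Suc k)) h" unfolding h_def
    by (rule pr_comp[OF O]) (use fp in \<open>auto intro: pr_proj\<close>)
  define G where "G = (\<lambda>ys. pr_rec g0 h (hd ys) (tl ys))"
  have Gp: "primrec_fn (Suc k) G" unfolding G_def by (rule primrec_fn.pr_rec[OF g0 hp])
  define F where "F = (\<lambda>ys. G (map ((!) ys) (k # [0..<k])))"
  have Fp: "primrec_fn (Suc k) F" unfolding F_def by (rule pr_perm[OF Gp]) auto
  have heq: "length zs = k \<Longrightarrow> pr_rec g0 h x zs = pr_rec g0 (\<lambda>ws. A [ws ! 1, f (take k (drop 2 ws) @ [ws ! 0])]) x zs" for x zs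
  proof (induction x)
    case 0 then show ?case by simp
  next
    case (Suc x)
    have "map ((!) (x # pr_rec g0 h x zs # zs)) [Suc (Suc 0)..<Suc (Suc k)] = zs"
      using map_nth_shift[of x "pr_rec g0 h x zs" zs] Suc.prems by simp
    then show ?case using Suc by (simp add: h_def fp_def)
  qed
  show ?thesis
  proof (intro exI conjI allI impI)
    show "primrec_fn (Suc k) F" by (rule Fp)
    fix ys :: "nat list" assume l: "length ys = Suc k"
    have "map ((!) ys) (k # [0..<k]) = ys ! k # take k ys" using l by (simp add: map_nth_upt_take)
    then show "F ys = pr_rec g0 (\<lambda>ws. A [ws ! 1, f (take k (drop 2 ws) @ [ws ! 0])]) (ys ! k) (take k ys)"
      using heq[of "take k ys" "ys ! k"] l by (simp add: F_def G_def)
  qed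
qed

lemma pp_ball:
  assumes "primrec_pred (Suc k) T"
  shows "primrec_pred (Suc k) (\<lambda>ys. \<forall>a<ys!k. T (take k ys @ [a]))"
proof -
  obtain f where f: "primrec_fn (Suc k) f" "\<forall>xs. length xs = Suc k \<longrightarrow> (T xs \<longleftrightarrow> f xs \<noteq> 0)"
    using assms unfolding primrec_pred_def by blast
  obtain A where A: "primrec_fn (Suc (Suc 0)) A" "\<forall>u v. A [u,v] = (if u = 0 then 0 else v)"
    using pr_and by blast
  obtain F where F: "primrec_fn (Suc k) F" "\<forall>ys. length ys = Suc k \<longrightarrow>
     F ys = pr_rec (\<lambda>_. Suc 0) (\<lambda>ws. A [ws ! 1, f (take k (drop 2 ws) @ [ws ! 0])]) (ys ! k) (take k ys)"
    using pr_bquant[OF f(1) A(1) pr_const1] by blast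
  have key: "length zs = k \<Longrightarrow> pr_rec (\<lambda>_. Suc 0) (\<lambda>ws. A [ws ! 1, f (take k (drop 2 ws) @ [ws ! 0])]) x zs \<noteq> 0
      \<longleftrightarrow> (\<forall>a<x. f (zs @ [a]) \<noteq> 0)" for zs x
    by (induction x) (auto simp: A(2) less_Suc_eq)
  show ?thesis unfolding primrec_pred_def
  proof (intro exI conjI allI impI)
    show "primrec_fn (Suc k) F" by (rule F(1))
    fix ys :: "nat list" assume l: "length ys = Suc k"
    show "(\<forall>a<ys ! k. T (take k ys @ [a])) = (F ys \<noteq> 0)"
      using F(2) l key[of "take k ys" "ys ! k"] f(2) by simp
  qed
qed

lemma pp_bex:
  assumes "primrec_pred (Suc k) T"
  shows "primrec_pred (Suc k) (\<lambda>ys. \<exists>a<ys!k. T (take k ys @ [a]))"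
proof -
  obtain f where f: "primrec_fn (Suc k) f" "\<forall>xs. length xs = Suc k \<longrightarrow> (T xs \<longleftrightarrow> f xs \<noteq> 0)"
    using assms unfolding primrec_pred_def by blast
  obtain A where A: "primrec_fn (Suc (Suc 0)) A" "\<forall>u v. A [u,v] = (if u = 0 then v else u)"
    using pr_or by blast
  obtain F where F: "primrec_fn (Suc k) F" "\<forall>ys. length ys = Suc k \<longrightarrow>
     F ys = pr_rec (\<lambda>_. 0) (\<lambda>ws. A [ws ! 1, f (take k (drop 2 ws) @ [ws ! 0])]) (ys ! k) (take k ys)"
    using pr_bquant[OF f(1) A(1) pr_zero] by blast
  have key: "length zs = k \<Longrightarrow> pr_rec (\<lambda>_. 0) (\<lambda>ws. A [ws ! 1, f (take k (drop 2 ws) @ [ws ! 0])]) x zs \<noteq> 0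
      \<longleftrightarrow> (\<exists>a<x. f (zs @ [a]) \<noteq> 0)" for zs x
    by (induction x) (auto simp: A(2) less_Suc_eq)
  show ?thesis unfolding primrec_pred_def
  proof (intro exI conjI allI impI)
    show "primrec_fn (Suc k) F" by (rule F(1))
    fix ys :: "nat list" assume l: "length ys = Suc k"
    show "(\<exists>a<ys ! k. T (take k ys @ [a])) = (F ys \<noteq> 0)"
      using F(2) l key[of "take k ys" "ys ! k"] f(2) by simp
  qed
qed



lemma arith_cong:
  assumes "arith b m k P" "\<forall>xs. length xs = k \<longrightarrow> P xs = P' xs"
  shows "arith b m k P'"
proof (cases m)
  case 0
  have "primrec_pred k P" using assms(1) 0 by (cases b) auto
  then have "primrec_pred k P'" using assms(2) unfolding primrec_pred_def by metis
  then show ?thesis using 0 by (cases b) auto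
next
  case (Suc m') then show ?thesis using assms by (cases b) auto
qed

lemma map_nth_append_small: "\<forall>i\<in>set is. i < length xs \<Longrightarrow> map ((!) (xs @ ys)) is = map ((!) xs) is"
  by (auto simp: nth_append)

lemma arith_perm:
  "arith b m k Q \<Longrightarrow> length is = k \<Longrightarrow> \<forall>i\<in>set is. i < j \<Longrightarrow> arith b m j (\<lambda>xs. Q (map ((!) xs) is))"
proof (induction m arbitrary: b k j Q "is")
  case 0
  have "primrec_pred k Q" using 0 by (cases b) auto
  then obtain f where f: "primrec_fn k f" "\<forall>xs. length xs = k \<longrightarrow> (Q xs \<longleftrightarrow> f xs \<noteq> 0)"
    unfolding primrec_pred_def by blast
  have "primrec_fn j (\<lambda>xs. f (map ((!) xs) is))" by (rule pr_perm[OF f(1)]) (use 0 in auto)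
  then have "primrec_pred j (\<lambda>xs. Q (map ((!) xs) is))" unfolding primrec_pred_def
    using f(2) 0 by (intro exI[of _ "\<lambda>xs. f (map ((!) xs) is)"]) auto
  then show ?case by (cases b) auto
next
  case (Suc m)
  show ?case
  proof (cases b)
    case True
    with Suc.prems obtain T where T: "arith False m (Suc k) T"
      "\<forall>xs. length xs = k \<longrightarrow> (Q xs \<longleftrightarrow> (\<exists>y. T (xs @ [y])))" by auto
    have "arith False m (Suc j) (\<lambda>xs. T (map ((!) xs) (is @ [j])))"
      by (rule Suc.IH[OF T(1)]) (use Suc.prems in auto)
    moreover have "\<forall>xs. length xs = j \<longrightarrow> (Q (map ((!) xs) is) \<longleftrightarrow> (\<exists>y. T (map ((!) (xs @ [y])) (is @ [j]))))"
      using T(2) Suc.prems by (auto simp: map_nth_append_small)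
    ultimately show ?thesis using True by auto
  next
    case False
    with Suc.prems obtain T where T: "arith True m (Suc k) T"
      "\<forall>xs. length xs = k \<longrightarrow> (Q xs \<longleftrightarrow> (\<forall>y. T (xs @ [y])))" by auto
    have "arith True m (Suc j) (\<lambda>xs. T (map ((!) xs) (is @ [j])))"
      by (rule Suc.IH[OF T(1)]) (use Suc.prems in auto)
    moreover have "\<forall>xs. length xs = j \<longrightarrow> (Q (map ((!) xs) is) \<longleftrightarrow> (\<forall>y. T (map ((!) (xs @ [y])) (is @ [j]))))"
      using T(2) Suc.prems by (auto simp: map_nth_append_small)
    ultimately show ?thesis using False by auto
  qed
qed

lemma len2_split: "length ws = Suc (Suc k) \<Longrightarrow> ws = take k ws @ [ws ! k, ws ! Suc k]"
  by (rule nth_equalityI) (auto simp: nth_append nth_Cons' less_Suc_eq)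

lemma len1_split: "length ws = Suc k \<Longrightarrow> ws = take k ws @ [ws ! k]"
  by (rule nth_equalityI) (auto simp: nth_append less_Suc_eq)

lemma swap_map: "length ws = Suc (Suc k) \<Longrightarrow>
   map ((!) ws) ([0..<k] @ [Suc k, k]) = take k ws @ [ws ! Suc k, ws ! k]"
  by (simp add: map_nth_upt_take)

lemma second_last:
  assumes IH: "\<forall>T. arith b m (Suc (Suc k)) T \<longrightarrow>
      arith b m (Suc (Suc k)) (\<lambda>ys. \<forall>a<ys!Suc k. T (take (Suc k) ys @ [a])) \<and>
      arith b m (Suc (Suc k)) (\<lambda>ys. \<exists>a<ys!Suc k. T (take (Suc k) ys @ [a]))"
    and S: "arith b m (Suc (Suc k)) S"
  shows "arith b m (Suc (Suc k)) (\<lambda>ws. \<forall>a<ws!k. S (take k ws @ [a, ws ! Suc k])) \<and>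
         arith b m (Suc (Suc k)) (\<lambda>ws. \<exists>a<ws!k. S (take k ws @ [a, ws ! Suc k]))"
proof -
  define S1 where "S1 = (\<lambda>ws. S (map ((!) ws) ([0..<k] @ [Suc k, k])))"
  have S1: "arith b m (Suc (Suc k)) S1" unfolding S1_def by (rule arith_perm[OF S]) auto
  have S1e: "S1 (zs @ [u, v]) = S (zs @ [v, u])" if "length zs = k" for zs u v
    using swap_map[of "zs @ [u,v]" k] that by (simp add: S1_def nth_append)
  note I = IH[rule_format, OF S1]
  have A: "arith b m (Suc (Suc k)) (\<lambda>ws. (\<lambda>ys. \<forall>a<ys!Suc k. S1 (take (Suc k) ys @ [a])) (map ((!) ws) ([0..<k] @ [Suc k, k])))"
    by (rule arith_perm[OF I[THEN conjunct1]]) auto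
  have E: "arith b m (Suc (Suc k)) (\<lambda>ws. (\<lambda>ys. \<exists>a<ys!Suc k. S1 (take (Suc k) ys @ [a])) (map ((!) ws) ([0..<k] @ [Suc k, k])))"
    by (rule arith_perm[OF I[THEN conjunct2]]) auto
  show ?thesis
  proof
    show "arith b m (Suc (Suc k)) (\<lambda>ws. \<forall>a<ws!k. S (take k ws @ [a, ws ! Suc k]))"
    proof (rule arith_cong[OF A], intro allI impI)
      fix ws :: "nat list" assume l: "length ws = Suc (Suc k)"
      have "take (Suc k) (take k ws @ [ws ! Suc k, ws ! k]) = take k ws @ [ws ! Suc k]" using l by simp
      then show "(\<lambda>ys. \<forall>a<ys!Suc k. S1 (take (Suc k) ys @ [a])) (map ((!) ws) ([0..<k] @ [Suc k, k])) =
          (\<forall>a<ws!k. S (take k ws @ [a, ws ! Suc k]))"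
        using l by (simp add: swap_map nth_append S1e map_nth_upt_take)
    qed
    show "arith b m (Suc (Suc k)) (\<lambda>ws. \<exists>a<ws!k. S (take k ws @ [a, ws ! Suc k]))"
    proof (rule arith_cong[OF E], intro allI impI)
      fix ws :: "nat list" assume l: "length ws = Suc (Suc k)"
      have "take (Suc k) (take k ws @ [ws ! Suc k, ws ! k]) = take k ws @ [ws ! Suc k]" using l by simp
      then show "(\<lambda>ys. \<exists>a<ys!Suc k. S1 (take (Suc k) ys @ [a])) (map ((!) ws) ([0..<k] @ [Suc k, k])) =
          (\<exists>a<ws!k. S (take k ws @ [a, ws ! Suc k]))"
        using l by (simp add: swap_map nth_append S1e map_nth_upt_take)
    qed
  qed
qed

lemma coll2: "(\<forall>a<(x::nat). \<exists>c. S a c) \<Longrightarrow> (\<exists>w. \<forall>a<x. \<exists>c<w. S a (c::nat))"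
proof (induction x)
  case 0 then show ?case by auto
next
  case (Suc x)
  then obtain w where w: "\<forall>a<x. \<exists>c<w. S a c" by auto
  obtain c0 where "S x c0" using Suc.prems by auto
  have "\<forall>a<Suc x. \<exists>c<max w (Suc c0). S a c"
  proof (intro allI impI)
    fix a assume "a < Suc x"
    then consider "a < x" | "a = x" by linarith
    then show "\<exists>c<max w (Suc c0). S a c"
    proof cases
      case 1 then obtain c where "c < w" "S a c" using w by blast
      then show ?thesis by (intro exI[of _ c]) simp
    next
      case 2 then show ?thesis using \<open>S x c0\<close> by (intro exI[of _ c0]) simp
    qed
  qed
  then show ?case by blast
qed

lemma coll1: "(\<forall>w. \<exists>a<(x::nat). \<forall>c<w. S a (c::nat)) \<Longrightarrow> (\<exists>a<x. \<forall>c. S a c)"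
  using coll2[of x "\<lambda>a c. \<not> S a c"] by blast

lemma app_simps:
  assumes "length xs = Suc k"
  shows "take k (xs @ ys) = take k xs" "(xs @ y # ys) ! k = xs ! k" "(xs @ [y]) ! Suc k = y"
    "take (Suc k) (take k xs @ [a, w]) = take k xs @ [a]" "(take k xs @ [a, w]) ! Suc k = w"
    "length (take k xs @ [a]) = Suc k"
  using assms by (auto simp: nth_append)

lemma bounded:
  "arith b m (Suc k) T \<Longrightarrow> arith b m (Suc k) (\<lambda>ys. \<forall>a<ys!k. T (take k ys @ [a])) \<and>
     arith b m (Suc k) (\<lambda>ys. \<exists>a<ys!k. T (take k ys @ [a]))"
proof (induction m arbitrary: b k T)
  case 0
  then have "primrec_pred (Suc k) T" by (cases b) auto
  then show ?case using pp_ball pp_bex by (cases b) auto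
next
  case (Suc m)
  have IHT: "\<forall>T. arith b' m (Suc (Suc k)) T \<longrightarrow>
      arith b' m (Suc (Suc k)) (\<lambda>ys. \<forall>a<ys!Suc k. T (take (Suc k) ys @ [a])) \<and>
      arith b' m (Suc (Suc k)) (\<lambda>ys. \<exists>a<ys!Suc k. T (take (Suc k) ys @ [a]))" for b'
    using Suc.IH by blast
  show ?case
  proof (cases b)
    case False
    with Suc.prems obtain S where S: "arith True m (Suc (Suc k)) S"
      "\<forall>zs. length zs = Suc k \<longrightarrow> (T zs \<longleftrightarrow> (\<forall>c. S (zs @ [c])))" by auto
    note SL = second_last[of True m k, OF IHT S(1)]
    have C: "arith True m (Suc (Suc k)) (\<lambda>ws. \<forall>c<ws!Suc k. S (take (Suc k) ws @ [c]))"
      using Suc.IH[OF S(1)] by blast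
    note CL = second_last[of True m k, OF IHT C]
    have P1: "arith False (Suc m) (Suc k) (\<lambda>ys. \<forall>a<ys!k. T (take k ys @ [a]))"
      unfolding arith.simps
    proof (intro exI conjI allI impI)
      show "arith True m (Suc (Suc k)) (\<lambda>ws. \<forall>a<ws!k. S (take k ws @ [a, ws ! Suc k]))"
        using SL by blast
      fix xs :: "nat list" assume l: "length xs = Suc k"
      show "(\<forall>a<xs ! k. T (take k xs @ [a])) =
          (\<forall>y. (\<lambda>ws. \<forall>a<ws!k. S (take k ws @ [a, ws ! Suc k])) (xs @ [y]))"
        using S(2) l by (simp add: app_simps) blast
    qed
    have P2: "arith False (Suc m) (Suc k) (\<lambda>ys. \<exists>a<ys!k. T (take k ys @ [a]))"
      unfolding arith.simps
    proof (intro exI conjI allI impI)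
      show "arith True m (Suc (Suc k)) (\<lambda>ws. \<exists>a<ws!k. (\<lambda>ws. \<forall>c<ws!Suc k. S (take (Suc k) ws @ [c])) (take k ws @ [a, ws ! Suc k]))"
        using CL by blast
      fix xs :: "nat list" assume l: "length xs = Suc k"
      have "(\<exists>a<xs ! k. \<forall>c. S (take k xs @ [a, c])) = (\<forall>w. \<exists>a<xs ! k. \<forall>c<w. S (take k xs @ [a, c]))"
        using coll1[of "xs ! k" "\<lambda>a c. S (take k xs @ [a, c])"] by blast
      then show "(\<exists>a<xs ! k. T (take k xs @ [a])) =
          (\<forall>y. (\<lambda>ws. \<exists>a<ws!k. (\<lambda>ws. \<forall>c<ws!Suc k. S (take (Suc k) ws @ [c])) (take k ws @ [a, ws ! Suc k])) (xs @ [y]))"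
        using S(2) l by (simp add: app_simps)
    qed
    show ?thesis using P1 P2 False by simp
  next
    case True
    with Suc.prems obtain S where S: "arith False m (Suc (Suc k)) S"
      "\<forall>zs. length zs = Suc k \<longrightarrow> (T zs \<longleftrightarrow> (\<exists>c. S (zs @ [c])))" by auto
    note SL = second_last[of False m k, OF IHT S(1)]
    have C: "arith False m (Suc (Suc k)) (\<lambda>ws. \<exists>c<ws!Suc k. S (take (Suc k) ws @ [c]))"
      using Suc.IH[OF S(1)] by blast
    note CL = second_last[of False m k, OF IHT C]
    have P1: "arith True (Suc m) (Suc k) (\<lambda>ys. \<exists>a<ys!k. T (take k ys @ [a]))"
      unfolding arith.simps
    proof (intro exI conjI allI impI)
      show "arith False m (Suc (Suc k)) (\<lambda>ws. \<exists>a<ws!k. S (take k ws @ [a, ws ! Suc k]))"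
        using SL by blast
      fix xs :: "nat list" assume l: "length xs = Suc k"
      show "(\<exists>a<xs ! k. T (take k xs @ [a])) =
          (\<exists>y. (\<lambda>ws. \<exists>a<ws!k. S (take k ws @ [a, ws ! Suc k])) (xs @ [y]))"
        using S(2) l by (simp add: app_simps) blast
    qed
    have P2: "arith True (Suc m) (Suc k) (\<lambda>ys. \<forall>a<ys!k. T (take k ys @ [a]))"
      unfolding arith.simps
    proof (intro exI conjI allI impI)
      show "arith False m (Suc (Suc k)) (\<lambda>ws. \<forall>a<ws!k. (\<lambda>ws. \<exists>c<ws!Suc k. S (take (Suc k) ws @ [c])) (take k ws @ [a, ws ! Suc k]))"
        using CL by blast
      fix xs :: "nat list" assume l: "length xs = Suc k"
      have "(\<forall>a<xs ! k. \<exists>c. S (take k xs @ [a, c])) = (\<exists>w. \<forall>a<xs ! k. \<exists>c<w. S (take k xs @ [a, c]))"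
        using coll2[of "xs ! k" "\<lambda>a c. S (take k xs @ [a, c])"] by blast
      then show "(\<forall>a<xs ! k. T (take k xs @ [a])) =
          (\<exists>y. (\<lambda>ws. \<forall>a<ws!k. (\<lambda>ws. \<exists>c<ws!Suc k. S (take (Suc k) ws @ [c])) (take k ws @ [a, ws ! Suc k])) (xs @ [y]))"
        using S(2) l by (simp add: app_simps)
    qed
    show ?thesis using P1 P2 True by simp
  qed
qed



lemma step:
  assumes "arith False (Suc (Suc m)) k Q"
  shows "\<exists>Q'. arith False m (Suc (Suc k)) Q' \<and>
    (\<forall>xs. length xs = k \<longrightarrow> (Q xs \<longleftrightarrow> (\<forall>x>0. \<exists>y>0. Q' (xs @ [x, y])))) \<and>
    (\<forall>xs x y x'. length xs = k \<longrightarrow> Q' (xs @ [x', y]) \<longrightarrow> x \<le> x' \<longrightarrow> Q' (xs @ [x, y]))"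
proof -
  obtain S where S: "arith True (Suc m) (Suc k) S" "\<forall>xs. length xs = k \<longrightarrow> (Q xs \<longleftrightarrow> (\<forall>a. S (xs @ [a])))"
    using assms by auto
  obtain R where R: "arith False m (Suc (Suc k)) R" "\<forall>ws. length ws = Suc k \<longrightarrow> (S ws \<longleftrightarrow> (\<exists>b. R (ws @ [b])))"
    using S(1) by auto
  define E1 where "E1 = (\<lambda>ws. \<exists>b<ws!Suc k. R (take (Suc k) ws @ [b]))"
  have E1: "arith False m (Suc (Suc k)) E1" unfolding E1_def using bounded[OF R(1)] by blast
  have IHT: "\<forall>T. arith False m (Suc (Suc k)) T \<longrightarrow>
      arith False m (Suc (Suc k)) (\<lambda>ys. \<forall>a<ys!Suc k. T (take (Suc k) ys @ [a])) \<and>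
      arith False m (Suc (Suc k)) (\<lambda>ys. \<exists>a<ys!Suc k. T (take (Suc k) ys @ [a]))"
    using bounded by blast
  define Q' where "Q' = (\<lambda>ws. \<forall>a<ws!k. E1 (take k ws @ [a, ws ! Suc k]))"
  have Q'a: "arith False m (Suc (Suc k)) Q'" unfolding Q'_def using second_last[OF IHT E1] by blast
  have Qe: "Q' (xs @ [x, y]) \<longleftrightarrow> (\<forall>a<x. \<exists>b<y. R (xs @ [a, b]))" if "length xs = k" for xs x y
    using that by (simp add: Q'_def E1_def nth_append)
  have Qi: "Q xs \<longleftrightarrow> (\<forall>x>0. \<exists>y>0. Q' (xs @ [x, y]))" if l: "length xs = k" for xs
  proof -
    have "Q xs \<longleftrightarrow> (\<forall>a. \<exists>b. R (xs @ [a, b]))" using S(2) R(2) l by simp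
    also have "\<dots> \<longleftrightarrow> (\<forall>x>0. \<exists>y>0. \<forall>a<x. \<exists>b<y. R (xs @ [a, b]))"
    proof
      assume H: "\<forall>a. \<exists>b. R (xs @ [a, b])"
      show "\<forall>x>0. \<exists>y>0. \<forall>a<x. \<exists>b<y. R (xs @ [a, b])"
      proof (intro allI impI)
        fix x :: nat
        obtain w where w: "\<forall>a<x. \<exists>b<w. R (xs @ [a, b])" using coll2[of x "\<lambda>a b. R (xs @ [a, b])"] H by blast
        show "\<exists>y>0. \<forall>a<x. \<exists>b<y. R (xs @ [a, b])"
        proof (rule exI[of _ "Suc w"], intro conjI allI impI)
          fix a assume "a < x"
          then obtain b where "b < w" "R (xs @ [a, b])" using w by blast
          then show "\<exists>b<Suc w. R (xs @ [a, b])" by (blast intro: less_SucI)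
        qed simp
      qed
    next
      assume H: "\<forall>x>0. \<exists>y>0. \<forall>a<x. \<exists>b<y. R (xs @ [a, b])"
      show "\<forall>a. \<exists>b. R (xs @ [a, b])"
      proof
        fix a
        obtain y where "\<forall>a'<Suc a. \<exists>b<y. R (xs @ [a', b])" using H by blast
        then show "\<exists>b. R (xs @ [a, b])" by blast
      qed
    qed
    finally show ?thesis using Qe l by simp
  qed
  have Qm: "Q' (xs @ [x, y])" if "length xs = k" "Q' (xs @ [x', y])" "x \<le> x'" for xs x y x'
    using that Qe by auto
  show ?thesis using Q'a Qi Qm by blast
qed



lemma chain:
  assumes Qn: "arith False (2*n-3) 1 Qn" and n: "n \<ge> 2"
  shows "j \<le> n-2 \<Longrightarrow> \<exists>P. P n = Qn \<and> arith False (2*(n-j)-3) (1+2*j) (P (n-j)) \<and>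
    (\<forall>i. n-j \<le> i \<and> i < n \<longrightarrow> arith False (2*i-3) (1+2*(n-i)) (P i) \<and>
      (\<forall>xs. length xs = 1+2*(n-i-1) \<longrightarrow> (P (Suc i) xs \<longleftrightarrow> (\<forall>x>0. \<exists>y>0. P i (xs@[x,y])))) \<and>
      (\<forall>xs x y x'. length xs = 1+2*(n-i-1) \<longrightarrow> P i (xs@[x',y]) \<longrightarrow> x \<le> x' \<longrightarrow> P i (xs@[x,y])))"
proof (induction j)
  case 0
  show ?case by (rule exI[of _ "\<lambda>_. Qn"]) (use Qn in auto)
next
  case (Suc j)
  have "j \<le> n - 2" using Suc.prems by simp
  from Suc.IH[OF this] obtain P where P: "P n = Qn" "arith False (2*(n-j)-3) (1+2*j) (P (n-j))"
    "\<forall>i. n-j \<le> i \<and> i < n \<longrightarrow> arith False (2*i-3) (1+2*(n-i)) (P i) \<and>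
      (\<forall>xs. length xs = 1+2*(n-i-1) \<longrightarrow> (P (Suc i) xs \<longleftrightarrow> (\<forall>x>0. \<exists>y>0. P i (xs@[x,y])))) \<and>
      (\<forall>xs x y x'. length xs = 1+2*(n-i-1) \<longrightarrow> P i (xs@[x',y]) \<longrightarrow> x \<le> x' \<longrightarrow> P i (xs@[x,y]))"
    by blast
  define i0 where "i0 = n - Suc j"
  have i0: "i0 \<ge> 2" "Suc i0 = n - j" "i0 < n" "n - i0 - 1 = j" "n - i0 = Suc j" using Suc.prems n unfolding i0_def by auto
  have lv: "2*(n-j)-3 = Suc (Suc (2*i0-3))" using i0 by simp
  obtain Q' where Q': "arith False (2*i0-3) (Suc (Suc (1+2*j))) Q'"
    "\<forall>xs. length xs = 1+2*j \<longrightarrow> (P (n-j) xs \<longleftrightarrow> (\<forall>x>0. \<exists>y>0. Q' (xs @ [x, y])))"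
    "\<forall>xs x y x'. length xs = 1+2*j \<longrightarrow> Q' (xs @ [x', y]) \<longrightarrow> x \<le> x' \<longrightarrow> Q' (xs @ [x, y])"
    using step[of "2*i0-3" "1+2*j" "P (n-j)"] P(2) lv by auto
  define P' where "P' = P(i0 := Q')"
  have "P' n = Qn" using P(1) i0 by (simp add: P'_def)
  moreover have "arith False (2*(n - Suc j)-3) (1+2*Suc j) (P' (n - Suc j))"
    using Q'(1) by (simp add: P'_def i0_def[symmetric])
  moreover have "\<forall>i. n - Suc j \<le> i \<and> i < n \<longrightarrow> arith False (2*i-3) (1+2*(n-i)) (P' i) \<and>
      (\<forall>xs. length xs = 1+2*(n-i-1) \<longrightarrow> (P' (Suc i) xs \<longleftrightarrow> (\<forall>x>0. \<exists>y>0. P' i (xs@[x,y])))) \<and>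
      (\<forall>xs x y x'. length xs = 1+2*(n-i-1) \<longrightarrow> P' i (xs@[x',y]) \<longrightarrow> x \<le> x' \<longrightarrow> P' i (xs@[x,y]))"
  proof (intro allI impI)
    fix i assume hi: "n - Suc j \<le> i \<and> i < n"
    show "arith False (2*i-3) (1+2*(n-i)) (P' i) \<and>
      (\<forall>xs. length xs = 1+2*(n-i-1) \<longrightarrow> (P' (Suc i) xs \<longleftrightarrow> (\<forall>x>0. \<exists>y>0. P' i (xs@[x,y])))) \<and>
      (\<forall>xs x y x'. length xs = 1+2*(n-i-1) \<longrightarrow> P' i (xs@[x',y]) \<longrightarrow> x \<le> x' \<longrightarrow> P' i (xs@[x,y]))"
    proof (cases "i = i0")
      case True
      have "P' (Suc i) = P (n - j)" using True i0 by (simp add: P'_def)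
      moreover have "P' i = Q'" using True by (simp add: P'_def)
      moreover have "1+2*(n-i) = Suc (Suc (1+2*j))" "1+2*(n-i-1) = 1+2*j" using True i0 by simp_all
      ultimately show ?thesis using True Q' by (simp only:)
    next
      case False
      then have "n - j \<le> i" using hi i0_def by auto
      moreover have e1: "P' i = P i" "P' (Suc i) = P (Suc i)" using False \<open>n - j \<le> i\<close> i0 by (auto simp: P'_def)
      have "arith False (2*i-3) (1+2*(n-i)) (P i) \<and>
      (\<forall>xs. length xs = 1+2*(n-i-1) \<longrightarrow> (P (Suc i) xs \<longleftrightarrow> (\<forall>x>0. \<exists>y>0. P i (xs@[x,y])))) \<and>
      (\<forall>xs x y x'. length xs = 1+2*(n-i-1) \<longrightarrow> P i (xs@[x',y]) \<longrightarrow> x \<le> x' \<longrightarrow> P i (xs@[x,y]))"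
        using P(3) hi \<open>n - j \<le> i\<close> by blast
      then show ?thesis unfolding e1 .
    qed
  qed
  ultimately show ?case by blast
qed



theorem lemma3:
  fixes n :: nat and Pn :: "nat list \<Rightarrow> bool"
  assumes "n \<ge> 2"
    and "Pi0_pos (2 * n - 3) 1 Pn"
  shows "\<exists>P :: nat \<Rightarrow> nat list \<Rightarrow> bool.
     P n = Pn \<and>
     (\<forall>i. 2 \<le> i \<and> i < n \<longrightarrow> Pi0_pos (2 * i - 3) (1 + 2 * (n - i)) (P i)) \<and>
     (\<forall>i. 2 \<le> i \<and> i < n \<longrightarrow>
        (\<forall>xs. length xs = 1 + 2 * (n - i - 1) \<and> pos_list xs \<longrightarrow>
           (P (Suc i) xs \<longleftrightarrow> (\<forall>x>0. \<exists>y>0. P i (xs @ [x, y]))) \<and>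
           (\<forall>x>0. (\<forall>y>0. \<not> P i (xs @ [x, y])) \<longrightarrow>
              (\<forall>x'\<ge>x. \<forall>y>0. \<not> P i (xs @ [x', y])))))"
proof -
  obtain Qn where Qn: "Pi0 (2*n-3) 1 Qn" "\<forall>xs. length xs = 1 \<and> pos_list xs \<longrightarrow> (Pn xs \<longleftrightarrow> Qn xs)"
    using assms(2) unfolding Pi0_pos_def by blast
  have "n-2 \<le> n-2" by simp
  from chain[OF Qn(1) assms(1) this] obtain P where P: "P n = Qn"
    "\<forall>i. n-(n-2) \<le> i \<and> i < n \<longrightarrow> arith False (2*i-3) (1+2*(n-i)) (P i) \<and>
      (\<forall>xs. length xs = 1+2*(n-i-1) \<longrightarrow> (P (Suc i) xs \<longleftrightarrow> (\<forall>x>0. \<exists>y>0. P i (xs@[x,y])))) \<and>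
      (\<forall>xs x y x'. length xs = 1+2*(n-i-1) \<longrightarrow> P i (xs@[x',y]) \<longrightarrow> x \<le> x' \<longrightarrow> P i (xs@[x,y]))"
    by blast
  have nn: "n - (n-2) = 2" using assms(1) by simp
  define P'' where "P'' = P(n := Pn)"
  have Pi: "arith False (2*i-3) (1+2*(n-i)) (P i) \<and>
      (\<forall>xs. length xs = 1+2*(n-i-1) \<longrightarrow> (P (Suc i) xs \<longleftrightarrow> (\<forall>x>0. \<exists>y>0. P i (xs@[x,y])))) \<and>
      (\<forall>xs x y x'. length xs = 1+2*(n-i-1) \<longrightarrow> P i (xs@[x',y]) \<longrightarrow> x \<le> x' \<longrightarrow> P i (xs@[x,y]))"
    if "2 \<le> i \<and> i < n" for i
  proof -
    have "n-(n-2) \<le> i \<and> i < n" using that nn by simp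
    then show ?thesis using P(2) by blast
  qed
  have H1: "P'' n = Pn" by (simp add: P''_def)
  have H2: "\<forall>i. 2 \<le> i \<and> i < n \<longrightarrow> Pi0_pos (2 * i - 3) (1 + 2 * (n - i)) (P'' i)"
  proof (intro allI impI)
    fix i assume hi: "2 \<le> i \<and> i < n"
    have ei: "P'' i = P i" using hi by (simp add: P''_def)
    show "Pi0_pos (2 * i - 3) (1 + 2 * (n - i)) (P'' i)" unfolding Pi0_pos_def ei
      using Pi[OF hi] by blast
  qed
  have H3: "\<forall>i. 2 \<le> i \<and> i < n \<longrightarrow>
        (\<forall>xs. length xs = 1 + 2 * (n - i - 1) \<and> pos_list xs \<longrightarrow>
           (P'' (Suc i) xs \<longleftrightarrow> (\<forall>x>0. \<exists>y>0. P'' i (xs @ [x, y]))) \<and>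
           (\<forall>x>0. (\<forall>y>0. \<not> P'' i (xs @ [x, y])) \<longrightarrow>
              (\<forall>x'\<ge>x. \<forall>y>0. \<not> P'' i (xs @ [x', y]))))"
  proof (intro allI impI)
    fix i xs assume hi: "2 \<le> i \<and> i < n" and hx: "length xs = 1 + 2 * (n - i - 1) \<and> pos_list xs"
    have ei: "P'' i = P i" using hi by (simp add: P''_def)
    have es: "P'' (Suc i) xs = P (Suc i) xs"
    proof (cases "Suc i = n")
      case True
      then have "length xs = 1" using hx by simp
      then show ?thesis using True Qn(2) hx P(1) by (simp add: P''_def)
    next
      case False then show ?thesis by (simp add: P''_def)
    qed
    note PP = Pi[OF hi]
    show "(P'' (Suc i) xs \<longleftrightarrow> (\<forall>x>0. \<exists>y>0. P'' i (xs @ [x, y]))) \<and>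
           (\<forall>x>0. (\<forall>y>0. \<not> P'' i (xs @ [x, y])) \<longrightarrow>
              (\<forall>x'\<ge>x. \<forall>y>0. \<not> P'' i (xs @ [x', y])))"
      unfolding es ei using PP hx by blast
  qed
  show ?thesis by (rule exI[of _ P'']) (intro conjI H1 H2 H3)
qed


end
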